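(* Let $C\subseteq\mathbb R^n$ be a convex body, $x\in\mathbb R^n$ and $R>0$ with $C\subseteq x+RB_2^n$. Then $|C|\le(n+1)\,\omega_{n-1}R^{n-1}r(C)$.
   Context: $r(C)$ (the inradius) is the maximal radius of a Euclidean ball contained in $C$; $\omega_{n-1}$ is the volume of the $(n-1)$-dimensional Euclidean unit ball; $B_2^n$ the Euclidean unit ball. *)

theory Defs
  imports "HOL-Analysis.Analysis"
begin

definition convex_body :: "'a::euclidean_space set \<Rightarrow> bool" where
  "convex_body C \<longleftrightarrow> compact C \<and> convex C \<and> interior C \<noteq> {}"

definition inradius :: "'a::euclidean_space set \<Rightarrow> real" where
  "inradius C = Sup {r. 0 \<le> r \<and> (\<exists>y. cball y r \<subseteq> C)}"

end

theory Submission
  imports Defs "HOL-Library.Countable_Set"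
begin


typedef (overloaded) ('a::euclidean_space) bidx = "Basis :: 'a set"
  using nonempty_Basis by blast

lemma bidx_UNIV: "(UNIV :: 'a::euclidean_space bidx set) = Abs_bidx ` Basis"
  by (metis Rep_bidx_inverse UNIV_I image_iff Rep_bidx subsetI subset_antisym)

instance bidx :: (euclidean_space) finite
  by standard (simp add: bidx_UNIV)

instantiation bidx :: (euclidean_space) linorder
begin
definition less_eq_bidx :: "'a bidx \<Rightarrow> 'a bidx \<Rightarrow> bool" where
  "less_eq_bidx x y \<longleftrightarrow> to_nat_on (UNIV :: 'a bidx set) x \<le> to_nat_on UNIV y"
definition less_bidx :: "'a bidx \<Rightarrow> 'a bidx \<Rightarrow> bool" where
  "less_bidx x y \<longleftrightarrow> to_nat_on (UNIV :: 'a bidx set) x < to_nat_on UNIV y"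
instance
proof
  have inj: "inj (to_nat_on (UNIV :: 'a bidx set))"
    by (rule inj_on_to_nat_on, simp add: countable_finite)
  fix x y z :: "'a bidx"
  show "(x < y) = (x \<le> y \<and> \<not> y \<le> x)" by (auto simp: less_eq_bidx_def less_bidx_def)
  show "x \<le> x" by (simp add: less_eq_bidx_def)
  show "x \<le> y \<Longrightarrow> y \<le> z \<Longrightarrow> x \<le> z" by (simp add: less_eq_bidx_def)
  show "x \<le> y \<Longrightarrow> y \<le> x \<Longrightarrow> x = y" using inj by (simp add: less_eq_bidx_def inj_eq)
  show "x \<le> y \<or> y \<le> x" by (auto simp: less_eq_bidx_def)
qed
end

instance bidx :: (euclidean_space) wellorder
proof
  fix P :: "'a bidx \<Rightarrow> bool" and a
  assume H: "\<And>x. (\<And>y. y < x \<Longrightarrow> P y) \<Longrightarrow> P x"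
  show "P a"
    by (induct a rule: measure_induct_rule[where f="to_nat_on (UNIV :: 'a bidx set)"])
       (rule H, simp add: less_bidx_def)
qed


lemma Rep_bidx_bij: "bij_betw Rep_bidx (UNIV :: 'a::euclidean_space bidx set) Basis"
  by (metis Rep_bidx_inject bij_betw_def inj_onI type_definition.Rep_range type_definition_bidx)

lemma Basis_vec_range: "(Basis :: (real^'n) set) = range (\<lambda>i. axis i 1)"
  by (auto simp: Basis_vec_def)

lemma prod_Basis_vec: "(\<Prod>b\<in>(Basis :: (real^'n) set). f b) = (\<Prod>i\<in>UNIV. f (axis i 1))"
  unfolding Basis_vec_range
  by (subst prod.reindex) (auto simp: inj_on_def axis_eq_axis)

definition JJ :: "'a::euclidean_space \<Rightarrow> real^('a bidx)" where
  "JJ x = (\<chi> i. x \<bullet> Rep_bidx i)"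

definition JI :: "real^('a::euclidean_space bidx) \<Rightarrow> 'a" where
  "JI z = (\<Sum>i\<in>UNIV. (z $ i) *\<^sub>R Rep_bidx i)"

lemma JJ_nth[simp]: "JJ x $ i = x \<bullet> Rep_bidx i"
  by (simp add: JJ_def)

lemma sum_bidx: "(\<Sum>i\<in>UNIV. f (Rep_bidx i)) = (\<Sum>b\<in>(Basis::'a::euclidean_space set). f b)"
  using sum.reindex_bij_betw[OF Rep_bidx_bij, of f] by simp

lemma prod_bidx: "(\<Prod>i\<in>UNIV. f (Rep_bidx i)) = (\<Prod>b\<in>(Basis::'a::euclidean_space set). f b)"
  using prod.reindex_bij_betw[OF Rep_bidx_bij, of f] by simp

lemma JI_inner: "JI z \<bullet> Rep_bidx j = z $ j"
proof -
  have "JI z \<bullet> Rep_bidx j = (\<Sum>i\<in>UNIV. z $ i * (Rep_bidx i \<bullet> Rep_bidx j))"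
    by (simp add: JI_def inner_sum_left)
  also have "\<dots> = (\<Sum>i\<in>UNIV. if i = j then z $ i else 0)"
    by (intro sum.cong refl) (auto simp: inner_Basis Rep_bidx Rep_bidx_inject)
  finally show ?thesis by simp
qed

lemma JJ_JI[simp]: "JJ (JI z) = z"
  by (simp add: vec_eq_iff JI_inner)

lemma JI_JJ[simp]: "JI (JJ x) = x"
  unfolding JI_def JJ_nth using sum_bidx[of "\<lambda>b. (x \<bullet> b) *\<^sub>R b"]
  by (simp add: euclidean_representation)

lemma linear_JJ: "linear JJ"
  by (rule linearI) (simp_all add: vec_eq_iff inner_add_left)

lemma JJ_inner: "JJ x \<bullet> JJ y = x \<bullet> y"
  unfolding inner_vec_def JJ_nth using sum_bidx[of "\<lambda>b. (x \<bullet> b) * (y \<bullet> b)"]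
  by (simp add: euclidean_inner[of x y])

lemma JJ_meas[measurable]: "JJ \<in> borel_measurable borel"
  by (intro borel_measurable_continuous_onI linear_continuous_on linear_JJ[THEN linear_conv_bounded_linear[THEN iffD1]])

lemma distr_JJ: "distr (lborel :: 'a::euclidean_space measure) borel JJ = lborel"
proof (rule lborel_eqI[symmetric])
  fix l u :: "real^('a bidx)"
  assume le: "\<And>b. b \<in> Basis \<Longrightarrow> l \<bullet> b \<le> u \<bullet> b"
  have pre: "JJ -` box l u = box (JI l) (JI u)"
  proof -
    have "y \<in> box (JI l) (JI u) \<longleftrightarrow> (\<forall>i. l $ i < y \<bullet> Rep_bidx i \<and> y \<bullet> Rep_bidx i < u $ i)" for y
    proof -
      have "y \<in> box (JI l) (JI u) \<longleftrightarrow> (\<forall>i. JI l \<bullet> Rep_bidx i < y \<bullet> Rep_bidx i \<and> y \<bullet> Rep_bidx i < JI u \<bullet> Rep_bidx i)"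
        unfolding mem_box using Rep_bidx_bij by (metis Rep_bidx Rep_bidx_cases)
      then show ?thesis by (simp add: JI_inner)
    qed
    then show ?thesis by (auto simp: mem_box_cart)
  qed
  have le2: "\<And>i. l $ i \<le> u $ i" using le[of "axis _ 1"] by (simp add: Basis_vec_def inner_axis) (metis UNIV_I)
  have "emeasure (distr lborel borel JJ) (box l u) = emeasure lborel (box (JI l) (JI u))"
    by (subst emeasure_distr) (auto simp: pre)
  also have "\<dots> = (\<Prod>b\<in>Basis. (JI u - JI l) \<bullet> b)"
  proof -
    have "\<forall>b\<in>Basis. JI l \<bullet> b \<le> JI u \<bullet> b"
      by (metis Rep_bidx_cases JI_inner le2)
    then show ?thesis by (subst emeasure_lborel_box_eq) (auto intro!: prod_nonneg simp: inner_diff_left)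
  qed
  also have "\<dots> = (\<Prod>i\<in>UNIV. (u - l) $ i)"
    by (simp flip: prod_bidx add: inner_diff_left JI_inner)
  also have "\<dots> = (\<Prod>b\<in>Basis. (u - l) \<bullet> b)"
    by (simp add: prod_Basis_vec inner_axis)
  finally show "emeasure (distr lborel borel JJ) (box l u) = (\<Prod>b\<in>Basis. (u - l) \<bullet> b)" .
qed simp



lemma emeasure_slab_cyl:
  fixes b :: "'a::euclidean_space"
  assumes b: "b \<in> Basis" and aa: "a \<le> a'" and R: "R > 0"
  shows "emeasure lborel {y::'a. a \<le> y \<bullet> b \<and> y \<bullet> b \<le> a' \<and> sqrt (\<Sum>i\<in>Basis - {b}. (y \<bullet> i)\<^sup>2) \<le> R}
     = ennreal ((a' - a) * unit_ball_vol (real (DIM('a) - 1)) * R ^ (DIM('a) - 1))"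
proof -
  let ?B = "Basis - {b} :: 'a set"
  let ?P = "\<lambda>f. a \<le> f b \<and> f b \<le> a' \<and> sqrt (\<Sum>i\<in>?B. (f i)\<^sup>2) \<le> R"
  interpret product_sigma_finite "\<lambda>_. lborel :: real measure" by standard
  have ins: "Basis = insert b ?B" using b by auto
  have cardB: "card ?B = DIM('a) - 1" using b by (simp add: card_Diff_singleton)
  have "emeasure lborel {y::'a. a \<le> y \<bullet> b \<and> y \<bullet> b \<le> a' \<and> sqrt (\<Sum>i\<in>?B. (y \<bullet> i)\<^sup>2) \<le> R}
      = emeasure (distr (\<Pi>\<^sub>M i\<in>Basis. lborel) borel (\<lambda>f. \<Sum>j\<in>(Basis::'a set). f j *\<^sub>R j))
           {y::'a. a \<le> y \<bullet> b \<and> y \<bullet> b \<le> a' \<and> sqrt (\<Sum>i\<in>?B. (y \<bullet> i)\<^sup>2) \<le> R}"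
    by (simp flip: lborel_eq)
  also have "\<dots> = emeasure (\<Pi>\<^sub>M i\<in>Basis. lborel) ({f. ?P f} \<inter> space (\<Pi>\<^sub>M i\<in>Basis. lborel))"
  proof (subst emeasure_distr)
    show "{y::'a. a \<le> y \<bullet> b \<and> y \<bullet> b \<le> a' \<and> sqrt (\<Sum>i\<in>?B. (y \<bullet> i)\<^sup>2) \<le> R} \<in> sets borel"
      by measurable
    have "(\<Sum>j\<in>(Basis::'a set). f j *\<^sub>R j) \<bullet> i = f i" if "i \<in> Basis" for f i
      using that by (simp add: inner_sum_left inner_Basis if_distrib cong: if_cong)
    then show "emeasure (\<Pi>\<^sub>M i\<in>Basis. lborel) ((\<lambda>f. \<Sum>j\<in>Basis. f j *\<^sub>R j) -` {y. a \<le> y \<bullet> b \<and> y \<bullet> b \<le> a' \<and> sqrt (\<Sum>i\<in>?B. (y \<bullet> i)\<^sup>2) \<le> R} \<inter> space (\<Pi>\<^sub>M i\<in>Basis. lborel)) =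
    emeasure (\<Pi>\<^sub>M i\<in>Basis. lborel) ({f. ?P f} \<inter> space (\<Pi>\<^sub>M i\<in>Basis. lborel))"
      using b by (intro arg_cong[where f="emeasure _"]) auto
  qed simp
  also have "\<dots> = nn_integral (\<Pi>\<^sub>M i\<in>insert b ?B. lborel) (indicator ({f. ?P f} \<inter> space (\<Pi>\<^sub>M i\<in>insert b ?B. lborel)))"
    by (subst nn_integral_indicator) (use b in \<open>auto simp: insert_absorb\<close>)
  also have "\<dots> = (\<integral>\<^sup>+ y. \<integral>\<^sup>+ x. indicator ({f. ?P f} \<inter> space (\<Pi>\<^sub>M i\<in>insert b ?B. lborel)) (x(b := y))
                   \<partial>(\<Pi>\<^sub>M i\<in>?B. lborel) \<partial>lborel)"
    by (subst product_nn_integral_insert_rev) (use b in \<open>auto simp: insert_absorb\<close>)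
  also have "\<dots> = (\<integral>\<^sup>+ y. indicator {a..a'} y * (\<integral>\<^sup>+ x. indicator ({f. sqrt (\<Sum>i\<in>?B. (f i)\<^sup>2) \<le> R} \<inter> space (\<Pi>\<^sub>M i\<in>?B. lborel)) x
                   \<partial>(\<Pi>\<^sub>M i\<in>?B. lborel)) \<partial>lborel)"
  proof (intro nn_integral_cong, goal_cases)
    case (1 y)
    have "(\<integral>\<^sup>+ x. indicator ({f. ?P f} \<inter> space (\<Pi>\<^sub>M i\<in>insert b ?B. lborel)) (x(b := y)) \<partial>(\<Pi>\<^sub>M i\<in>?B. lborel))
        = (\<integral>\<^sup>+ x. indicator {a..a'} y * indicator ({f. sqrt (\<Sum>i\<in>?B. (f i)\<^sup>2) \<le> R} \<inter> space (\<Pi>\<^sub>M i\<in>?B. lborel)) x \<partial>(\<Pi>\<^sub>M i\<in>?B. lborel))"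
    proof (intro nn_integral_cong, goal_cases)
      case (1 x)
      have "(\<Sum>i\<in>?B. ((x(b := y)) i)\<^sup>2) = (\<Sum>i\<in>?B. (x i)\<^sup>2)" by (intro sum.cong) auto
      then show ?case using 1 by (auto simp: indicator_def space_PiM PiE_def extensional_def)
    qed
    then show ?case by (simp add: nn_integral_cmult)
  qed
  also have "\<dots> = (\<integral>\<^sup>+ y. indicator {a..a'} y * ennreal (unit_ball_vol (real (card ?B)) * R ^ card ?B) \<partial>lborel)"
    using R by (subst nn_integral_indicator) (auto simp: emeasure_cball_aux)
  also have "\<dots> = ennreal (unit_ball_vol (real (card ?B)) * R ^ card ?B) * emeasure lborel {a..a'}"
    by (subst nn_integral_cmult_indicator[symmetric]) (auto simp: mult.commute)
  also have "\<dots> = ennreal ((a' - a) * unit_ball_vol (real (DIM('a) - 1)) * R ^ (DIM('a) - 1))"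
    using aa R by (simp add: cardB ennreal_mult' mult_ac)
  finally show ?thesis .
qed



lemma sqrt_sum_sq_le_norm:
  fixes z :: "'a::euclidean_space"
  shows "sqrt (\<Sum>i\<in>Basis - {e}. (z \<bullet> i)\<^sup>2) \<le> norm z"
proof -
  have "(\<Sum>i\<in>Basis - {e}. (z \<bullet> i)\<^sup>2) \<le> (\<Sum>i\<in>Basis. (z \<bullet> i)\<^sup>2)"
    by (intro sum_mono2) auto
  also have "\<dots> = z \<bullet> z" by (simp add: euclidean_inner[of z z] power2_eq_square)
  finally show ?thesis by (simp add: norm_eq_sqrt_inner)
qed

lemma card_bidx: "CARD('a::euclidean_space bidx) = DIM('a)"
  using bij_betw_same_card[OF Rep_bidx_bij] by simp

lemma emeasure_JJ_image:
  fixes K :: "'a::euclidean_space set"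
  assumes "K \<in> sets borel" "JJ ` K \<in> sets borel"
  shows "emeasure lborel (JJ ` K) = emeasure lborel K"
proof -
  have "emeasure lborel (JJ ` K) = emeasure (distr (lborel :: 'a measure) borel JJ) (JJ ` K)"
    by (simp add: distr_JJ)
  also have "\<dots> = emeasure lborel (JJ -` JJ ` K \<inter> space lborel)"
    using assms by (subst emeasure_distr) auto
  also have "JJ -` JJ ` K \<inter> space lborel = K"
    by (auto, metis JI_JJ)
  finally show ?thesis .
qed

lemma slab_ball_measure0:
  fixes u :: "'a::euclidean_space"
  assumes u: "norm u = 1" and cc: "c \<le> c'" and R: "R > 0"
  shows "measure lebesgue ({y. c \<le> u \<bullet> y \<and> u \<bullet> y \<le> c'} \<inter> cball 0 R)
           \<le> (c' - c) * unit_ball_vol (real (DIM('a) - 1)) * R ^ (DIM('a) - 1)"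
proof -
  define K0 where "K0 = {y. c \<le> u \<bullet> y \<and> u \<bullet> y \<le> c'} \<inter> cball (0::'a) R"
  have cK0: "compact K0" unfolding K0_def
    by (intro closed_Int_compact) (auto intro!: closed_Collect_conj closed_Collect_le continuous_intros)
  have contJJ: "continuous_on UNIV JJ"
    by (intro linear_continuous_on linear_JJ[THEN linear_conv_bounded_linear[THEN iffD1]])
  have cJK: "compact (JJ ` K0)"
    using cK0 contJJ by (meson compact_continuous_image continuous_on_subset subset_UNIV)
  have e1: "measure lebesgue (JJ ` K0) = measure lebesgue K0"
    using emeasure_JJ_image[of K0] cK0 cJK
    by (simp add: measure_def borel_compact)
  have nJu: "norm (JJ u) = 1" using u by (simp add: norm_eq_sqrt_inner JJ_inner)
  define e where "e = (axis undefined 1 :: real^('a bidx))"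
  have eB: "e \<in> Basis" by (simp add: e_def Basis_vec_def) (metis UNIV_I)
  obtain Q where Q: "orthogonal_transformation Q" "Q (JJ u) = e"
    using orthogonal_transformation_exists[of "JJ u" e] nJu by (auto simp: e_def)
  have e2: "measure lebesgue (Q ` JJ ` K0) = measure lebesgue (JJ ` K0)"
    by (rule measure_orthogonal_image[OF Q(1) lmeasurable_compact[OF cJK]])
  define S1 where "S1 = {z::real^('a bidx). c \<le> z \<bullet> e \<and> z \<bullet> e \<le> c' \<and> sqrt (\<Sum>i\<in>Basis - {e}. (z \<bullet> i)\<^sup>2) \<le> R}"
  have sub: "Q ` JJ ` K0 \<subseteq> S1"
  proof
    fix z assume "z \<in> Q ` JJ ` K0"
    then obtain y where y: "y \<in> K0" "z = Q (JJ y)" by auto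
    have "z \<bullet> e = y \<bullet> u"
      using Q y(2) by (metis JJ_inner orthogonal_transformation_def)
    moreover have "norm z = norm y"
      using Q y(2) by (metis JJ_inner orthogonal_transformation_def norm_eq_sqrt_inner)
    ultimately show "z \<in> S1"
      using y(1) sqrt_sum_sq_le_norm[where e=e and z=z] by (auto simp: S1_def K0_def inner_commute)
  qed
  have S1e: "emeasure lborel S1 = ennreal ((c' - c) * unit_ball_vol (real (DIM('a) - 1)) * R ^ (DIM('a) - 1))"
    unfolding S1_def using emeasure_slab_cyl[OF eB cc R] by (simp add: DIM_cart card_bidx)
  have S1b: "S1 \<in> sets borel" unfolding S1_def by measurable
  have S1f: "S1 \<in> fmeasurable lebesgue"
    using S1e S1b by (simp add: fmeasurable_def)
  have "measure lebesgue (Q ` JJ ` K0) \<le> measure lebesgue S1"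
  proof -
    have "continuous_on UNIV Q"
      using Q(1) by (intro linear_continuous_on linear_conv_bounded_linear[THEN iffD1] orthogonal_transformation_linear)
    then have "compact (Q ` JJ ` K0)"
      using cJK by (meson compact_continuous_image continuous_on_subset subset_UNIV)
    then show ?thesis
      by (intro measure_mono_fmeasurable[OF sub _ S1f] fmeasurableD lmeasurable_compact)
  qed
  also have "\<dots> = (c' - c) * unit_ball_vol (real (DIM('a) - 1)) * R ^ (DIM('a) - 1)"
    using S1e S1b cc R by (simp add: measure_def)
  finally show ?thesis using e1 e2 by (simp add: K0_def)
qed



definition hsup :: "'a::euclidean_space set \<Rightarrow> 'a \<Rightarrow> real" where
  "hsup C u = Sup ((\<lambda>y. u \<bullet> y) ` C)"

lemma hsup_bdd:
  assumes "compact C" shows "bdd_above ((\<lambda>y. u \<bullet> y) ` C)"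
proof -
  have "compact ((\<lambda>y. u \<bullet> y) ` C)"
    using assms by (intro compact_continuous_image continuous_intros)
  then show ?thesis by (meson bounded_imp_bdd_above compact_imp_bounded)
qed

lemma hsup_upper:
  assumes "compact C" "y \<in> C" shows "u \<bullet> y \<le> hsup C u"
  unfolding hsup_def using assms hsup_bdd[OF assms(1)] by (intro cSup_upper) auto

lemma hsup_attained:
  assumes "compact C" "C \<noteq> {}" shows "\<exists>y\<in>C. hsup C u = u \<bullet> y"
proof -
  obtain y where "y \<in> C" "\<forall>z\<in>C. u \<bullet> z \<le> u \<bullet> y"
  proof -
    have "continuous_on C ((\<bullet>) u)" by (intro continuous_on_inner continuous_on_const continuous_on_id)
    then show ?thesis using continuous_attains_sup[OF assms(1,2), of "\<lambda>y. u \<bullet> y"] that by auto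
  qed
  moreover have "hsup C u = u \<bullet> y"
    unfolding hsup_def using calculation assms by (intro cSup_eq_maximum) auto
  ultimately show ?thesis by blast
qed

lemma hsup_least:
  assumes "C \<noteq> {}" "\<And>y. y \<in> C \<Longrightarrow> u \<bullet> y \<le> m" shows "hsup C u \<le> m"
  unfolding hsup_def using assms by (intro cSup_least) auto

lemma hsup_lipschitz:
  assumes "compact C" "C \<noteq> {}" "\<And>y. y \<in> C \<Longrightarrow> norm y \<le> M"
  shows "hsup C u \<le> hsup C u' + M * norm (u - u')"
proof -
  obtain y where y: "y \<in> C" "hsup C u = u \<bullet> y" using hsup_attained[OF assms(1,2)] by blast
  have "u \<bullet> y = u' \<bullet> y + (u - u') \<bullet> y" by (simp add: inner_diff_left)
  also have "(u - u') \<bullet> y \<le> norm (u - u') * norm y" by (rule norm_cauchy_schwarz)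
  also have "\<dots> \<le> norm (u - u') * M" using assms(3)[OF y(1)] by (simp add: mult_left_mono)
  finally show ?thesis using hsup_upper[OF assms(1) y(1), of u'] y(2) by (simp add: mult.commute)
qed

lemma hsup_continuous:
  assumes "compact C" "C \<noteq> {}"
  shows "continuous_on UNIV (hsup C)"
proof -
  obtain M where M: "\<And>y. y \<in> C \<Longrightarrow> norm y \<le> M" "M > 0"
    using compact_imp_bounded[OF assms(1)] by (meson bounded_pos)
  have L: "\<bar>hsup C u - hsup C u'\<bar> \<le> M * norm (u - u')" for u u'
    using hsup_lipschitz[OF assms M(1), of u u'] hsup_lipschitz[OF assms M(1), of u' u]
    by (simp add: norm_minus_commute abs_le_iff)
  show ?thesis
    unfolding continuous_on_iff
  proof (intro ballI allI impI)
    fix u :: 'a and e :: real assume e: "e > 0"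
    show "\<exists>d>0. \<forall>u'\<in>UNIV. dist u' u < d \<longrightarrow> dist (hsup C u') (hsup C u) < e"
    proof (intro exI[of _ "e / M"] conjI ballI impI)
      show "e / M > 0" using e M by simp
      fix u' assume "dist u' u < e / M"
      then have "M * norm (u' - u) < e" using M(2) by (simp add: dist_norm field_simps)
      then show "dist (hsup C u') (hsup C u) < e" using L[of u' u] by (simp add: dist_real_def)
    qed
  qed
qed

lemma ball_sub_iff:
  assumes "compact C" "convex C" "C \<noteq> {}" "s \<ge> 0"
  shows "cball c s \<subseteq> C \<longleftrightarrow> (\<forall>u. norm u = 1 \<longrightarrow> u \<bullet> c + s \<le> hsup C u)"
proof
  assume H: "cball c s \<subseteq> C"
  show "\<forall>u. norm u = 1 \<longrightarrow> u \<bullet> c + s \<le> hsup C u"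
  proof (intro allI impI)
    fix u :: 'a assume u: "norm u = 1"
    have "c + s *\<^sub>R u \<in> C" using H u assms(4) by (auto simp: dist_norm)
    then have "u \<bullet> (c + s *\<^sub>R u) \<le> hsup C u" by (rule hsup_upper[OF assms(1)])
    then show "u \<bullet> c + s \<le> hsup C u" using u by (simp add: inner_add_right norm_eq_1)
  qed
next
  assume H: "\<forall>u. norm u = 1 \<longrightarrow> u \<bullet> c + s \<le> hsup C u"
  show "cball c s \<subseteq> C"
  proof
    fix z assume z: "z \<in> cball c s"
    show "z \<in> C"
    proof (rule ccontr)
      assume "z \<notin> C"
      then obtain a b where ab: "a \<bullet> z < b" "\<forall>y\<in>C. b < a \<bullet> y"
        using separating_hyperplane_closed_point[OF assms(2) compact_imp_closed[OF assms(1)]] by blast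
      have a0: "a \<noteq> 0" using ab assms(3) by auto
      define v where "v = - (a /\<^sub>R norm a)"
      have v1: "norm v = 1" using a0 by (simp add: v_def)
      have "hsup C v \<le> - b / norm a"
      proof (rule hsup_least[OF assms(3)])
        fix y assume "y \<in> C"
        then have "b < a \<bullet> y" using ab by auto
        then show "v \<bullet> y \<le> - b / norm a" using a0 by (simp add: v_def field_simps)
      qed
      also have "- b / norm a < v \<bullet> z" using ab(1) a0 by (simp add: v_def field_simps)
      also have "v \<bullet> z = v \<bullet> c + v \<bullet> (z - c)" by (simp add: inner_diff_right)
      also have "v \<bullet> (z - c) \<le> norm v * norm (z - c)" by (rule norm_cauchy_schwarz)
      also have "norm v * norm (z - c) \<le> s" using v1 z by (simp add: dist_norm norm_minus_commute)
      finally have "hsup C v < v \<bullet> c + s" by simp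
      then show False using H v1 by force
    qed
  qed
qed



lemma inball_max:
  fixes C :: "'a::euclidean_space set"
  assumes cC: "compact C" and vC: "convex C" and iC: "interior C \<noteq> {}" and sub: "C \<subseteq> cball x R"
  obtains c r where "r \<ge> 0" "cball c r \<subseteq> C" "\<And>c' s. s \<ge> 0 \<Longrightarrow> cball c' s \<subseteq> C \<Longrightarrow> s \<le> r"
proof -
  have ne: "C \<noteq> {}" using iC interior_subset by blast
  define K where "K = {p :: 'a \<times> real. 0 \<le> snd p \<and> cball (fst p) (snd p) \<subseteq> C}"
  have K_eq: "K = {p. 0 \<le> snd p} \<inter> (\<Inter>u\<in>sphere 0 1. {p. u \<bullet> fst p + snd p \<le> hsup C u})"
  proof (intro set_eqI iffI)
    fix p assume "p \<in> K"
    then show "p \<in> {p. 0 \<le> snd p} \<inter> (\<Inter>u\<in>sphere 0 1. {p. u \<bullet> fst p + snd p \<le> hsup C u})"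
      using ball_sub_iff[OF cC vC ne, of "snd p" "fst p"] by (auto simp: K_def)
  next
    fix p assume "p \<in> {p. 0 \<le> snd p} \<inter> (\<Inter>u\<in>sphere 0 1. {p. u \<bullet> fst p + snd p \<le> hsup C u})"
    then show "p \<in> K"
      using ball_sub_iff[OF cC vC ne, of "snd p" "fst p"] by (auto simp: K_def)
  qed
  have "closed K" unfolding K_eq
    by (intro closed_Int closed_INT ballI closed_Collect_le continuous_intros)
  moreover have "bounded K"
  proof (rule bounded_subset[OF bounded_Times[OF bounded_cball bounded_cball]])
    show "K \<subseteq> cball x R \<times> cball 0 R"
    proof
      fix p assume "p \<in> K"
      then have "0 \<le> snd p" "cball (fst p) (snd p) \<subseteq> cball x R" using sub by (auto simp: K_def)
      then have "dist (fst p) x + snd p \<le> R" by (simp add: cball_subset_cball_iff)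
      then show "p \<in> cball x R \<times> cball 0 R" using \<open>0 \<le> snd p\<close>
        by (cases p) (auto simp: dist_commute intro: order_trans[OF _ \<open>dist (fst p) x + snd p \<le> R\<close>])
    qed
  qed
  ultimately have kK: "compact K" by (simp add: compact_eq_bounded_closed)
  obtain c0 where "c0 \<in> interior C" using iC by blast
  then obtain e where e: "e > 0" "cball c0 e \<subseteq> interior C"
    using open_contains_cball open_interior by blast
  then have "(c0, e) \<in> K" using interior_subset by (auto simp: K_def)
  then have "K \<noteq> {}" by blast
  then obtain p where p: "p \<in> K" "\<forall>q\<in>K. snd q \<le> snd p"
    using continuous_attains_sup[OF kK _ continuous_on_snd[OF continuous_on_id]] by blast
  show ?thesis
  proof (rule that[of "snd p" "fst p"])
    show "snd p \<ge> 0" "cball (fst p) (snd p) \<subseteq> C" using p(1) by (auto simp: K_def)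
    fix c' s assume "s \<ge> 0" "cball c' s \<subseteq> C"
    then have "(c', s) \<in> K" by (simp add: K_def)
    then show "s \<le> snd p" using p(2) by force
  qed
qed

lemma contact_hull:
  fixes C :: "'a::euclidean_space set"
  assumes cC: "compact C" and vC: "convex C" and ne: "C \<noteq> {}"
    and r: "r \<ge> 0" and inb: "cball c r \<subseteq> C"
    and mx: "\<And>c' s. s \<ge> 0 \<Longrightarrow> cball c' s \<subseteq> C \<Longrightarrow> s \<le> r"
  shows "0 \<in> convex hull {u. norm u = 1 \<and> u \<bullet> c + r = hsup C u}"
proof (rule ccontr)
  let ?U = "{u::'a. norm u = 1 \<and> u \<bullet> c + r = hsup C u}"
  assume nz: "0 \<notin> convex hull ?U"
  have hc: "continuous_on UNIV (hsup C)" by (rule hsup_continuous[OF cC ne])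
  have ge: "u \<bullet> c + r \<le> hsup C u" if "norm u = 1" for u
    using ball_sub_iff[OF cC vC ne r] inb that by blast
  have "closed ?U"
  proof (rule closed_Collect_conj)
    show "closed {u::'a. norm u = 1}" by (intro closed_Collect_eq continuous_intros)
    show "closed {u. u \<bullet> c + r = hsup C u}" by (rule closed_Collect_eq[OF _ hc]) (intro continuous_intros)
  qed
  moreover have "bounded ?U" by (rule bounded_subset[OF bounded_cball[of 0 1]]) auto
  ultimately have "compact ?U" by (simp add: compact_eq_bounded_closed)
  then have "compact (convex hull ?U)" by (rule compact_convex_hull)
  then have clU: "closed (convex hull ?U)" by (rule compact_imp_closed)
  obtain v \<beta> where v: "v \<noteq> 0" "0 < \<beta>" "\<forall>z\<in>convex hull ?U. v \<bullet> z > \<beta>"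
    using separating_hyperplane_closed_0[OF convex_convex_hull clU nz] by blast
  have vU: "v \<bullet> u > \<beta>" if "u \<in> ?U" for u using v(3) hull_inc[OF that] by blast
  define V where "V = {u::'a. norm u = 1 \<and> v \<bullet> u \<le> \<beta> / 2}"
  have "\<exists>m>0. \<forall>u\<in>V. m \<le> hsup C u - u \<bullet> c - r"
  proof (cases "V = {}")
    case True then show ?thesis by (intro exI[of _ 1]) auto
  next
    case False
    have "closed V" unfolding V_def
      by (intro closed_Collect_conj closed_Collect_eq closed_Collect_le continuous_intros)
    moreover have "bounded V" by (rule bounded_subset[OF bounded_cball[of 0 1]]) (auto simp: V_def)
    ultimately have "compact V" by (simp add: compact_eq_bounded_closed)
    moreover have "continuous_on V (\<lambda>u. hsup C u - u \<bullet> c - r)"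
      by (intro continuous_intros continuous_on_subset[OF hc subset_UNIV])
    ultimately have "\<exists>u0\<in>V. \<forall>u\<in>V. hsup C u0 - u0 \<bullet> c - r \<le> hsup C u - u \<bullet> c - r"
      by (intro continuous_attains_inf False)
    then obtain u0 where u0: "u0 \<in> V" "\<forall>u\<in>V. hsup C u0 - u0 \<bullet> c - r \<le> hsup C u - u \<bullet> c - r"
      by blast
    have "hsup C u0 - u0 \<bullet> c - r > 0"
    proof -
      have "u0 \<notin> ?U" using u0(1) vU[of u0] v(2) by (auto simp: V_def)
      then show ?thesis using ge[of u0] u0(1) by (auto simp: V_def)
    qed
    then show ?thesis using u0 by blast
  qed
  then obtain m where m: "m > 0" "\<And>u. u \<in> V \<Longrightarrow> m \<le> hsup C u - u \<bullet> c - r" by blast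
  define \<epsilon> where "\<epsilon> = m / (2 * norm v)"
  define \<delta> where "\<delta> = min (m / 2) (\<epsilon> * \<beta> / 2)"
  have \<epsilon>: "\<epsilon> > 0" using m v by (simp add: \<epsilon>_def)
  have \<delta>: "\<delta> > 0" using m \<epsilon> v by (simp add: \<delta>_def)
  have all: "\<forall>u. norm u = 1 \<longrightarrow> u \<bullet> (c - \<epsilon> *\<^sub>R v) + (r + \<delta>) \<le> hsup C u"
  proof (intro allI impI)
    fix u :: 'a assume u: "norm u = 1"
    have key: "\<delta> \<le> hsup C u - u \<bullet> c - r + \<epsilon> * (v \<bullet> u)"
    proof (cases "v \<bullet> u \<le> \<beta> / 2")
      case True
      then have m1: "m \<le> hsup C u - u \<bullet> c - r" using m(2) u by (simp add: V_def)
      have cs: "- (v \<bullet> u) \<le> norm v" using norm_cauchy_schwarz[of "-v" u] u by simp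
      have "- (\<epsilon> * (v \<bullet> u)) \<le> \<epsilon> * norm v" using mult_left_mono[OF cs, of \<epsilon>] \<epsilon> by simp
      also have "\<epsilon> * norm v = m / 2" using v by (simp add: \<epsilon>_def)
      finally have m2: "- (\<epsilon> * (v \<bullet> u)) \<le> m / 2" .
      have "\<delta> \<le> m / 2" by (simp add: \<delta>_def)
      then show ?thesis using m1 m2 by linarith
    next
      case False
      then have "\<epsilon> * \<beta> / 2 \<le> \<epsilon> * (v \<bullet> u)" using \<epsilon> by (simp add: field_simps)
      moreover have "\<delta> \<le> \<epsilon> * \<beta> / 2" by (simp add: \<delta>_def)
      ultimately show ?thesis using ge[OF u] by linarith
    qed
    show "u \<bullet> (c - \<epsilon> *\<^sub>R v) + (r + \<delta>) \<le> hsup C u"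
      using key by (simp add: inner_diff_right inner_commute)
  qed
  have rd: "0 \<le> r + \<delta>" using r \<delta> by linarith
  have "cball (c - \<epsilon> *\<^sub>R v) (r + \<delta>) \<subseteq> C"
    using ball_sub_iff[OF cC vC ne rd, of "c - \<epsilon> *\<^sub>R v"] all by blast
  then have "r + \<delta> \<le> r" by (rule mx[OF rd])
  then show False using \<delta> by simp
qed



lemma width_bound:
  fixes C :: "'a::euclidean_space set"
  assumes cC: "compact C" and vC: "convex C" and ne: "C \<noteq> {}"
    and r: "r \<ge> 0" and inb: "cball c r \<subseteq> C"
    and mx: "\<And>c' s. s \<ge> 0 \<Longrightarrow> cball c' s \<subseteq> C \<Longrightarrow> s \<le> r"
  shows "\<exists>u. norm u = 1 \<and> (\<forall>y\<in>C. u \<bullet> c - real DIM('a) * r \<le> u \<bullet> y \<and> u \<bullet> y \<le> u \<bullet> c + r)"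
proof -
  let ?U = "{u::'a. norm u = 1 \<and> u \<bullet> c + r = hsup C u}"
  have "0 \<in> convex hull ?U" by (rule contact_hull[OF assms])
  then obtain T where T: "finite T" "T \<subseteq> ?U" "card T \<le> DIM('a) + 1" "0 \<in> convex hull T"
    unfolding caratheodory[of ?U] by blast
  then obtain l where l: "\<forall>t\<in>T. 0 \<le> l t" "sum l T = 1" "(\<Sum>t\<in>T. l t *\<^sub>R t) = 0"
    unfolding convex_hull_finite[OF T(1)] by blast
  have Tne: "T \<noteq> {}" using l(2) by auto
  define l0 where "l0 = Max (l ` T)"
  obtain t0 where t0: "t0 \<in> T" "l t0 = l0"
  proof -
    have "Max (l ` T) \<in> l ` T" using T(1) Tne by (intro Max_in) auto
    then show ?thesis using that unfolding l0_def by auto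
  qed
  have lle: "l t \<le> l0" if "t \<in> T" for t using T(1) that unfolding l0_def by simp
  have "1 \<le> real (card T) * l0"
    using sum_bounded_above[of T l l0] lle l(2) by simp
  also have "\<dots> \<le> real (DIM('a) + 1) * l0"
    using T(3) t0 l(1) by (intro mult_right_mono) auto
  finally have l0n: "1 \<le> real (DIM('a) + 1) * l0" .
  have l0pos: "l0 > 0"
  proof (rule ccontr)
    assume "\<not> l0 > 0"
    then have "real (DIM('a) + 1) * l0 \<le> 0" by (simp add: mult_nonneg_nonpos)
    with l0n show False by simp
  qed
  have t0u: "norm t0 = 1" using t0 T(2) by auto
  show ?thesis
  proof (intro exI[of _ t0] conjI ballI)
    show "norm t0 = 1" by (rule t0u)
    fix y assume y: "y \<in> C"
    have tle: "t \<bullet> (y - c) \<le> r" if "t \<in> T" for t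
    proof -
      have "t \<bullet> y \<le> hsup C t" by (rule hsup_upper[OF cC y])
      moreover have "t \<bullet> c + r = hsup C t" using T(2) that by auto
      ultimately show ?thesis by (simp add: inner_diff_right)
    qed
    show "t0 \<bullet> y \<le> t0 \<bullet> c + r" using tle[OF t0(1)] by (simp add: inner_diff_right)
    have "0 = (\<Sum>t\<in>T. l t *\<^sub>R t) \<bullet> (y - c)" using l(3) by simp
    also have "\<dots> = (\<Sum>t\<in>T. l t * (t \<bullet> (y - c)))" by (simp add: inner_sum_left)
    also have "\<dots> = l t0 * (t0 \<bullet> (y - c)) + (\<Sum>t\<in>T - {t0}. l t * (t \<bullet> (y - c)))"
      using T(1) t0(1) by (simp add: sum.remove)
    also have "(\<Sum>t\<in>T - {t0}. l t * (t \<bullet> (y - c))) \<le> (\<Sum>t\<in>T - {t0}. l t * r)"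
      using l(1) tle by (intro sum_mono mult_left_mono) auto
    also have "(\<Sum>t\<in>T - {t0}. l t * r) = (1 - l0) * r"
      using T(1) t0 l(2) by (simp add: sum_distrib_right[symmetric] sum_diff1)
    finally have ineq: "0 \<le> l0 * (t0 \<bullet> (y - c)) + (1 - l0) * r" using t0(2) by simp
    have "0 \<le> l0 * (t0 \<bullet> (y - c) + real DIM('a) * r)"
    proof -
      have "1 * r \<le> (real (DIM('a) + 1) * l0) * r" by (rule mult_right_mono[OF l0n r])
      moreover have "(real (DIM('a) + 1) * l0) * r = l0 * (real DIM('a) * r) + l0 * r"
        by (simp add: algebra_simps)
      moreover have "(1 - l0) * r = r - l0 * r" by (simp add: algebra_simps)
      moreover have "l0 * (t0 \<bullet> (y - c) + real DIM('a) * r) = l0 * (t0 \<bullet> (y - c)) + l0 * (real DIM('a) * r)"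
        by (simp add: algebra_simps)
      ultimately show ?thesis using ineq by linarith
    qed
    then have "0 \<le> t0 \<bullet> (y - c) + real DIM('a) * r" using l0pos by (simp add: zero_le_mult_iff)
    then show "t0 \<bullet> c - real DIM('a) * r \<le> t0 \<bullet> y" by (simp add: inner_diff_right)
  qed
qed



lemma slab_ball_measure:
  fixes u x :: "'a::euclidean_space"
  assumes u: "norm u = 1" and aa: "a \<le> a'" and R: "R > 0"
  shows "measure lebesgue ({y. a \<le> u \<bullet> y \<and> u \<bullet> y \<le> a'} \<inter> cball x R)
           \<le> (a' - a) * unit_ball_vol (real (DIM('a) - 1)) * R ^ (DIM('a) - 1)"
proof -
  define K0 where "K0 = {y. a - u \<bullet> x \<le> u \<bullet> y \<and> u \<bullet> y \<le> a' - u \<bullet> x} \<inter> cball (0::'a) R"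
  have eq: "{y. a \<le> u \<bullet> y \<and> u \<bullet> y \<le> a'} \<inter> cball x R = (+) x ` K0"
  proof (intro set_eqI iffI)
    fix y assume "y \<in> {y. a \<le> u \<bullet> y \<and> u \<bullet> y \<le> a'} \<inter> cball x R"
    then have "y - x \<in> K0" by (auto simp: K0_def inner_diff_right dist_norm norm_minus_commute)
    then show "y \<in> (+) x ` K0" by (rule rev_image_eqI) simp
  next
    fix y assume "y \<in> (+) x ` K0"
    then show "y \<in> {y. a \<le> u \<bullet> y \<and> u \<bullet> y \<le> a'} \<inter> cball x R"
      by (auto simp: K0_def inner_add_right dist_norm)
  qed
  have "measure lebesgue ((+) x ` K0) = measure lebesgue K0" by (rule measure_translation)
  also have "\<dots> \<le> ((a' - u \<bullet> x) - (a - u \<bullet> x)) * unit_ball_vol (real (DIM('a) - 1)) * R ^ (DIM('a) - 1)"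
    unfolding K0_def using aa by (intro slab_ball_measure0[OF u _ R]) simp
  finally show ?thesis using eq by simp
qed

theorem mainTheorem10:
  fixes C :: "'a::euclidean_space set" and x :: 'a and R :: real
  assumes "convex_body C" and "R > 0" and "C \<subseteq> cball x R"
  shows "measure lebesgue C \<le>
           real (DIM('a) + 1) * unit_ball_vol (real (DIM('a) - 1)) * R ^ (DIM('a) - 1) * inradius C"
proof -
  have cC: "compact C" and vC: "convex C" and iC: "interior C \<noteq> {}"
    using assms(1) by (auto simp: convex_body_def)
  have ne: "C \<noteq> {}" using iC interior_subset by blast
  obtain r c where r: "r \<ge> 0" and inb: "cball c r \<subseteq> C"
    and mx: "\<And>c' s. s \<ge> 0 \<Longrightarrow> cball c' s \<subseteq> C \<Longrightarrow> s \<le> r"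
    using inball_max[OF cC vC iC assms(3)] by metis
  have "\<exists>u. norm u = 1 \<and> (\<forall>y\<in>C. u \<bullet> c - real DIM('a) * r \<le> u \<bullet> y \<and> u \<bullet> y \<le> u \<bullet> c + r)"
    by (rule width_bound[OF cC vC ne r inb]) (rule mx)
  then obtain u where u: "norm u = 1"
    and sl: "\<forall>y\<in>C. u \<bullet> c - real DIM('a) * r \<le> u \<bullet> y \<and> u \<bullet> y \<le> u \<bullet> c + r"
    by blast
  define S where "S = {y. u \<bullet> c - real DIM('a) * r \<le> u \<bullet> y \<and> u \<bullet> y \<le> u \<bullet> c + r} \<inter> cball x R"
  have sub: "C \<subseteq> S" using sl assms(3) by (auto simp: S_def)
  have cS: "compact S" unfolding S_def
    by (intro closed_Int_compact) (auto intro!: closed_Collect_conj closed_Collect_le continuous_intros)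
  have "measure lebesgue C \<le> measure lebesgue S"
    by (rule measure_mono_fmeasurable[OF sub fmeasurableD[OF lmeasurable_compact[OF cC]] lmeasurable_compact[OF cS]])
  also have "\<dots> \<le> ((u \<bullet> c + r) - (u \<bullet> c - real DIM('a) * r)) * unit_ball_vol (real (DIM('a) - 1)) * R ^ (DIM('a) - 1)"
  proof -
    have "0 \<le> real DIM('a) * r" using r by simp
    then show ?thesis unfolding S_def using r by (intro slab_ball_measure[OF u _ assms(2)]) linarith
  qed
  also have "((u \<bullet> c + r) - (u \<bullet> c - real DIM('a) * r)) = real (DIM('a) + 1) * r"
    by (simp add: algebra_simps)
  also have "real (DIM('a) + 1) * r * unit_ball_vol (real (DIM('a) - 1)) * R ^ (DIM('a) - 1)
      = (real (DIM('a) + 1) * unit_ball_vol (real (DIM('a) - 1)) * R ^ (DIM('a) - 1)) * r"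
    by (simp add: algebra_simps)
  also have "\<dots> \<le> (real (DIM('a) + 1) * unit_ball_vol (real (DIM('a) - 1)) * R ^ (DIM('a) - 1)) * inradius C"
  proof (rule mult_left_mono)
    show "0 \<le> real (DIM('a) + 1) * unit_ball_vol (real (DIM('a) - 1)) * R ^ (DIM('a) - 1)"
      using assms(2) by simp
    have bdd: "bdd_above {r. 0 \<le> r \<and> (\<exists>y. cball y r \<subseteq> C)}"
    proof (rule bdd_aboveI)
      fix s assume "s \<in> {r. 0 \<le> r \<and> (\<exists>y. cball y r \<subseteq> C)}"
      then obtain y where "0 \<le> s" "cball y s \<subseteq> cball x R" using assms(3) by auto
      then have "dist y x + s \<le> R" by (simp add: cball_subset_cball_iff)
      then show "s \<le> R" using zero_le_dist[of y x] by linarith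
    qed
    show "r \<le> inradius C" unfolding inradius_def
      using r inb by (intro cSup_upper[OF _ bdd]) auto
  qed
  finally show ?thesis .
qed


end
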